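(* Let $G$ be a connected graph of order $n$ and let $k\ge\chi(G)$ be an integer. Then $\overline{\mathrm{scs}}(G,k)=n$ if and only if $k>\chi(G)$, and likewise $\overline{\mathrm{lcs}}(G,k)=n$ if and only if $k>\chi(G)$.
   Context: All graphs are finite and simple. For a graph $G=(V,E)$ and an integer $k\ge\chi(G)$, a proper $k$-colouring is a map $c:V\to[k]$ with $c(u)\neq c(v)$ for every edge $uv$. A set $S\subseteq V$ is a determining set for $(G,c)$ if there is no proper $k$-colouring $c'\neq c$ of $G$ with $c'(s)=c(s)$ for all $s\in S$. A critical set for $(G,c)$ is an inclusion-minimal determining set. $\mathrm{scs}(G,c)$ and $\mathrm{lcs}(G,c)$ are the sizes of a smallest resp. largest critical set for $(G,c)$. $\overline{\mathrm{scs}}(G,k)$ and $\overline{\mathrm{lcs}}(G,k)$ are the maxima of $\mathrm{scs}(G,c)$ resp. $\mathrm{lcs}(G,c)$ over all proper $k$-colourings $c$ of $G$. *)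

theory Defs
  imports Main
begin

definition simple_graph :: "'a set \<Rightarrow> ('a \<Rightarrow> 'a \<Rightarrow> bool) \<Rightarrow> bool" where
  "simple_graph V E \<longleftrightarrow> finite V \<and> (\<forall>u v. E u v \<longrightarrow> u \<in> V \<and> v \<in> V)
     \<and> (\<forall>u v. E u v \<longrightarrow> E v u) \<and> (\<forall>v. \<not> E v v)"

definition connected_graph :: "'a set \<Rightarrow> ('a \<Rightarrow> 'a \<Rightarrow> bool) \<Rightarrow> bool" where
  "connected_graph V E \<longleftrightarrow> V \<noteq> {} \<and> (\<forall>u\<in>V. \<forall>v\<in>V. E\<^sup>*\<^sup>* u v)"

definition proper_colouring :: "'a set \<Rightarrow> ('a \<Rightarrow> 'a \<Rightarrow> bool) \<Rightarrow> nat \<Rightarrow> ('a \<Rightarrow> nat) \<Rightarrow> bool" where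
  "proper_colouring V E k c \<longleftrightarrow> (\<forall>v\<in>V. c v \<in> {1..k})
     \<and> (\<forall>u\<in>V. \<forall>v\<in>V. E u v \<longrightarrow> c u \<noteq> c v)"

definition chromatic_number :: "'a set \<Rightarrow> ('a \<Rightarrow> 'a \<Rightarrow> bool) \<Rightarrow> nat" where
  "chromatic_number V E = (LEAST k. \<exists>c. proper_colouring V E k c)"

text \<open>Colourings are compared on V only (values outside V are irrelevant).\<close>
definition determining_set :: "'a set \<Rightarrow> ('a \<Rightarrow> 'a \<Rightarrow> bool) \<Rightarrow> nat \<Rightarrow> ('a \<Rightarrow> nat) \<Rightarrow> 'a set \<Rightarrow> bool" where
  "determining_set V E k c S \<longleftrightarrow> S \<subseteq> V \<and>
     \<not> (\<exists>c'. proper_colouring V E k c' \<and> (\<exists>v\<in>V. c' v \<noteq> c v) \<and> (\<forall>s\<in>S. c' s = c s))"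

definition critical_set :: "'a set \<Rightarrow> ('a \<Rightarrow> 'a \<Rightarrow> bool) \<Rightarrow> nat \<Rightarrow> ('a \<Rightarrow> nat) \<Rightarrow> 'a set \<Rightarrow> bool" where
  "critical_set V E k c S \<longleftrightarrow> determining_set V E k c S
     \<and> (\<forall>T. T \<subset> S \<longrightarrow> \<not> determining_set V E k c T)"

definition scs :: "'a set \<Rightarrow> ('a \<Rightarrow> 'a \<Rightarrow> bool) \<Rightarrow> nat \<Rightarrow> ('a \<Rightarrow> nat) \<Rightarrow> nat" where
  "scs V E k c = Min {card S | S. critical_set V E k c S}"

definition lcs :: "'a set \<Rightarrow> ('a \<Rightarrow> 'a \<Rightarrow> bool) \<Rightarrow> nat \<Rightarrow> ('a \<Rightarrow> nat) \<Rightarrow> nat" where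
  "lcs V E k c = Max {card S | S. critical_set V E k c S}"

definition scs_bar :: "'a set \<Rightarrow> ('a \<Rightarrow> 'a \<Rightarrow> bool) \<Rightarrow> nat \<Rightarrow> nat" where
  "scs_bar V E k = Max {scs V E k c | c. proper_colouring V E k c}"

definition lcs_bar :: "'a set \<Rightarrow> ('a \<Rightarrow> 'a \<Rightarrow> bool) \<Rightarrow> nat \<Rightarrow> nat" where
  "lcs_bar V E k = Max {lcs V E k c | c. proper_colouring V E k c}"

end

theory Submission
  imports Defs
begin

lemma det_V: "determining_set V E k c V"
  by (auto simp: determining_set_def)

lemma crit_sub: "critical_set V E k c S \<Longrightarrow> S \<subseteq> V"
  by (auto simp: critical_set_def determining_set_def)

lemma crit_exists:
  assumes "finite V"
  shows "\<exists>S. critical_set V E k c S"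
proof -
  let ?P = "\<lambda>m. \<exists>S. determining_set V E k c S \<and> card S = m"
  have "?P (card V)" using det_V by blast
  then have "?P (LEAST m. ?P m)" by (rule LeastI)
  then obtain S where S: "determining_set V E k c S" "card S = (LEAST m. ?P m)" by blast
  have "S \<subseteq> V" using S(1) by (auto simp: determining_set_def)
  hence fS: "finite S" using assms finite_subset by blast
  have "\<not> determining_set V E k c T" if "T \<subset> S" for T
  proof
    assume d: "determining_set V E k c T"
    hence "(LEAST m. ?P m) \<le> card T" by (intro Least_le) blast
    moreover have "card T < card S" using that fS psubset_card_mono by blast
    ultimately show False using S(2) by simp
  qed
  thus ?thesis using S(1) unfolding critical_set_def by blast
qed

lemma fin_cards:
  assumes "finite V"
  shows "finite {card S | S. critical_set V E k c S}"
        "\<forall>x\<in>{card S | S. critical_set V E k c S}. x \<le> card V"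
        "{card S | S. critical_set V E k c S} \<noteq> {}"
proof -
  show b: "\<forall>x\<in>{card S | S. critical_set V E k c S}. x \<le> card V"
  proof
    fix x assume "x \<in> {card S | S. critical_set V E k c S}"
    then obtain S where "x = card S" "critical_set V E k c S" by blast
    thus "x \<le> card V" using crit_sub assms card_mono by metis
  qed
  have "{card S | S. critical_set V E k c S} \<subseteq> {..card V}" using b by blast
  thus "finite {card S | S. critical_set V E k c S}" using finite_subset by blast
  show "{card S | S. critical_set V E k c S} \<noteq> {}" using crit_exists[OF assms] by blast
qed

lemma scs_lcs_le:
  assumes "finite V"
  shows "scs V E k c \<le> card V" "lcs V E k c \<le> card V"
proof -
  note f = fin_cards[OF assms, of E k c]
  have "Min {card S | S. critical_set V E k c S} \<in> {card S | S. critical_set V E k c S}"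
    using f(1,3) by (rule Min_in)
  thus "scs V E k c \<le> card V" using f(2) unfolding scs_def by blast
  have "Max {card S | S. critical_set V E k c S} \<in> {card S | S. critical_set V E k c S}"
    using f(1,3) by (rule Max_in)
  thus "lcs V E k c \<le> card V" using f(2) unfolding lcs_def by blast
qed

lemma chi_exists:
  assumes "simple_graph V E"
  shows "\<exists>c. proper_colouring V E (chromatic_number V E) c"
proof -
  have fV: "finite V" using assms by (simp add: simple_graph_def)
  obtain h where h: "bij_betw h V {0..<card V}" using ex_bij_betw_finite_nat[OF fV] by blast
  have "proper_colouring V E (card V) (\<lambda>v. h v + 1)"
    unfolding proper_colouring_def
  proof (intro conjI ballI impI notI)
    fix v assume "v \<in> V"
    hence "h v \<in> {0..<card V}" using h bij_betwE by blast
    thus "h v + 1 \<in> {1..card V}" by simp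
  next
    fix u v assume "u \<in> V" "v \<in> V" "E u v" "h u + 1 = h v + 1"
    hence "h u = h v" "inj_on h V" using h bij_betw_imp_inj_on by auto
    hence "u = v" using \<open>u \<in> V\<close> \<open>v \<in> V\<close> inj_on_eq_iff by metis
    thus False using assms \<open>E u v\<close> by (simp add: simple_graph_def)
  qed
  hence "\<exists>m c. proper_colouring V E m c" by blast
  thus ?thesis unfolding chromatic_number_def by (rule LeastI_ex)
qed

lemma chi_min: "proper_colouring V E m c \<Longrightarrow> chromatic_number V E \<le> m"
  unfolding chromatic_number_def by (rule Least_le) blast

lemma forced:
  assumes sg: "simple_graph V E" and ne: "V \<noteq> {}" and kk: "k = chromatic_number V E"
    and pc: "proper_colouring V E k c"
  shows "\<exists>v\<in>V. determining_set V E k c (V - {v})"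
proof (rule ccontr)
  assume "\<not> ?thesis"
  hence nd: "\<forall>v\<in>V. \<not> determining_set V E k c (V - {v})" by blast
  have pc1: "\<And>v. v \<in> V \<Longrightarrow> c v \<in> {1..k}" using pc unfolding proper_colouring_def by blast
  have pc2: "\<And>u v. u \<in> V \<Longrightarrow> v \<in> V \<Longrightarrow> E u v \<Longrightarrow> c u \<noteq> c v"
    using pc unfolding proper_colouring_def by blast
  have sym: "\<And>u v. E u v \<Longrightarrow> E v u" and irr: "\<And>v. \<not> E v v"
    using sg unfolding simple_graph_def by blast+
  have k1: "k \<ge> 1"
  proof -
    obtain v where "v \<in> V" using ne by blast
    hence "c v \<in> {1..k}" by (rule pc1)
    thus ?thesis by simp
  qed
  have free: "\<exists>j. j \<in> {1..k} \<and> j \<noteq> c v \<and> (\<forall>u\<in>V. E v u \<longrightarrow> c u \<noteq> j)" if "v \<in> V" for v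
  proof -
    have "\<not> determining_set V E k c (V - {v})" using nd that by blast
    moreover have "V - {v} \<subseteq> V" by blast
    ultimately obtain c' where c': "proper_colouring V E k c'" "\<exists>w\<in>V. c' w \<noteq> c w"
      "\<forall>s\<in>V - {v}. c' s = c s"
      unfolding determining_set_def by blast
    have "c' v \<noteq> c v"
    proof
      assume "c' v = c v"
      obtain w where w: "w \<in> V" "c' w \<noteq> c w" using c'(2) by blast
      show False
      proof (cases "w = v")
        case True thus False using w \<open>c' v = c v\<close> by simp
      next
        case False thus False using w c'(3) by blast
      qed
    qed
    moreover have "c' v \<in> {1..k}" using c'(1) that unfolding proper_colouring_def by blast
    moreover have "\<forall>u\<in>V. E v u \<longrightarrow> c u \<noteq> c' v"
    proof (intro ballI impI)
      fix u assume u: "u \<in> V" "E v u"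
      hence "u \<noteq> v" using irr by blast
      hence "c' u = c u" using c'(3) u(1) by blast
      moreover have "c' v \<noteq> c' u" using c'(1) u that unfolding proper_colouring_def by blast
      ultimately show "c u \<noteq> c' v" by simp
    qed
    ultimately show ?thesis by blast
  qed
  define f where "f v = (SOME j. j \<in> {1..k} \<and> j \<noteq> c v \<and> (\<forall>u\<in>V. E v u \<longrightarrow> c u \<noteq> j))" for v
  have fP: "f v \<in> {1..k} \<and> f v \<noteq> c v \<and> (\<forall>u\<in>V. E v u \<longrightarrow> c u \<noteq> f v)" if "v \<in> V" for v
    unfolding f_def using someI_ex[OF free[OF that]] .
  define c2 where "c2 v = (if c v = k then f v else c v)" for v
  have "proper_colouring V E (k - 1) c2"
    unfolding proper_colouring_def
  proof (intro conjI ballI impI notI)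
    fix v assume v: "v \<in> V"
    show "c2 v \<in> {1..k - 1}"
    proof (cases "c v = k")
      case True
      hence "c2 v = f v" by (simp add: c2_def)
      moreover have "f v \<in> {1..k}" "f v \<noteq> k" using fP[OF v] True by auto
      ultimately show ?thesis by auto
    next
      case False
      hence "c2 v = c v" by (simp add: c2_def)
      moreover have "c v \<in> {1..k}" using pc1 v by blast
      ultimately show ?thesis using False by auto
    qed
  next
    fix u v assume u: "u \<in> V" and v: "v \<in> V" and e: "E u v" and eq: "c2 u = c2 v"
    have e': "E v u" using e sym by blast
    have ne: "c u \<noteq> c v" using pc2 u v e by blast
    show False
    proof (cases "c u = k")
      case True
      hence "c v \<noteq> k" using ne by simp
      hence "c2 v = c v" "c2 u = f u" using True by (simp_all add: c2_def)
      moreover have "c v \<noteq> f u" using fP[OF u] v e by blast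
      ultimately show False using eq by simp
    next
      case False
      show False
      proof (cases "c v = k")
        case True
        hence "c2 v = f v" "c2 u = c u" using False by (simp_all add: c2_def)
        moreover have "c u \<noteq> f v" using fP[OF v] u e' by blast
        ultimately show False using eq by simp
      next
        case F2: False
        hence "c2 v = c v" "c2 u = c u" using False by (simp_all add: c2_def)
        thus False using eq ne by simp
      qed
    qed
  qed
  hence "chromatic_number V E \<le> k - 1" by (rule chi_min)
  thus False using kk k1 by simp
qed

lemma max_eq: "finite A \<Longrightarrow> n \<in> A \<Longrightarrow> \<forall>x\<in>A. x \<le> n \<Longrightarrow> Max A = (n::nat)"
  by (simp add: Max_eqI)

lemma bar_facts:
  assumes fV: "finite V" and pk: "proper_colouring V E k c0"
  shows "finite {scs V E k c | c. proper_colouring V E k c}"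
        "scs V E k c0 \<in> {scs V E k c | c. proper_colouring V E k c}"
        "\<forall>x\<in>{scs V E k c | c. proper_colouring V E k c}. x \<le> card V"
        "finite {lcs V E k c | c. proper_colouring V E k c}"
        "lcs V E k c0 \<in> {lcs V E k c | c. proper_colouring V E k c}"
        "\<forall>x\<in>{lcs V E k c | c. proper_colouring V E k c}. x \<le> card V"
proof -
  show b1: "\<forall>x\<in>{scs V E k c | c. proper_colouring V E k c}. x \<le> card V"
    using scs_lcs_le[OF fV] by blast
  show b2: "\<forall>x\<in>{lcs V E k c | c. proper_colouring V E k c}. x \<le> card V"
    using scs_lcs_le[OF fV] by blast
  have "{scs V E k c | c. proper_colouring V E k c} \<subseteq> {..card V}" using b1 by blast
  thus "finite {scs V E k c | c. proper_colouring V E k c}" using finite_subset by blast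
  have "{lcs V E k c | c. proper_colouring V E k c} \<subseteq> {..card V}" using b2 by blast
  thus "finite {lcs V E k c | c. proper_colouring V E k c}" using finite_subset by blast
  show "scs V E k c0 \<in> {scs V E k c | c. proper_colouring V E k c}" using pk by blast
  show "lcs V E k c0 \<in> {lcs V E k c | c. proper_colouring V E k c}" using pk by blast
qed

theorem theorem5:
  fixes V :: "'a set" and E :: "'a \<Rightarrow> 'a \<Rightarrow> bool" and n k :: nat
  assumes "simple_graph V E" and "connected_graph V E" and "card V = n"
    and "k \<ge> chromatic_number V E"
  shows "(scs_bar V E k = n \<longleftrightarrow> k > chromatic_number V E)
       \<and> (lcs_bar V E k = n \<longleftrightarrow> k > chromatic_number V E)"
proof -
  have fV: "finite V" using assms(1) by (simp add: simple_graph_def)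
  have ne: "V \<noteq> {}" using assms(2) by (simp add: connected_graph_def)
  obtain c0 where c0: "proper_colouring V E (chromatic_number V E) c0"
    using chi_exists[OF assms(1)] by blast
  have c01: "\<And>v. v \<in> V \<Longrightarrow> c0 v \<in> {1..chromatic_number V E}"
    using c0 unfolding proper_colouring_def by blast
  have c02: "\<And>u v. u \<in> V \<Longrightarrow> v \<in> V \<Longrightarrow> E u v \<Longrightarrow> c0 u \<noteq> c0 v"
    using c0 unfolding proper_colouring_def by blast
  have pk: "proper_colouring V E k c0"
    unfolding proper_colouring_def
  proof (intro conjI ballI impI)
    fix v assume "v \<in> V" thus "c0 v \<in> {1..k}" using c01 assms(4) by fastforce
  next
    fix u v assume "u \<in> V" "v \<in> V" "E u v" thus "c0 u \<noteq> c0 v" by (rule c02)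
  qed
  note BF = bar_facts[OF fV pk]
  show ?thesis
  proof (cases "k > chromatic_number V E")
    case True
    have allV: "S = V" if S: "critical_set V E k c0 S" for S
    proof (rule ccontr)
      assume "S \<noteq> V"
      then obtain v where v: "v \<in> V" "v \<notin> S" using crit_sub[OF S] by blast
      define c' where "c' = c0(v := k)"
      have "proper_colouring V E k c'"
        unfolding proper_colouring_def
      proof (intro conjI ballI impI)
        fix w assume w: "w \<in> V"
        show "c' w \<in> {1..k}"
        proof (cases "w = v")
          case True thus ?thesis using \<open>k > chromatic_number V E\<close> by (simp add: c'_def)
        next
          case False thus ?thesis using c01[OF w] \<open>k > chromatic_number V E\<close>
            by (auto simp add: c'_def)
        qed
      next
        fix u w assume u: "u \<in> V" and w: "w \<in> V" and e: "E u w"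
        have uw: "u \<noteq> w" using e assms(1) unfolding simple_graph_def by blast
        show "c' u \<noteq> c' w"
        proof (cases "u = v")
          case True
          hence "c' u = k" "c' w = c0 w" using uw by (simp_all add: c'_def)
          thus ?thesis using c01[OF w] \<open>k > chromatic_number V E\<close> by auto
        next
          case False
          show ?thesis
          proof (cases "w = v")
            case True
            hence "c' w = k" "c' u = c0 u" using False by (simp_all add: c'_def)
            thus ?thesis using c01[OF u] \<open>k > chromatic_number V E\<close> by auto
          next
            case F2: False
            hence "c' w = c0 w" "c' u = c0 u" using False by (simp_all add: c'_def)
            thus ?thesis using c02[OF u w e] by simp
          qed
        qed
      qed
      moreover have "c' v \<noteq> c0 v" using c01[OF v(1)] True by (auto simp: c'_def)
      moreover have "\<forall>s\<in>S. c' s = c0 s" using v(2) by (auto simp: c'_def)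
      moreover have "determining_set V E k c0 S" using S unfolding critical_set_def by blast
      ultimately show False using v(1) unfolding determining_set_def by blast
    qed
    have cs: "{card S | S. critical_set V E k c0 S} = {n}"
    proof -
      have "{card S | S. critical_set V E k c0 S} \<subseteq> {n}" using allV assms(3) by blast
      thus ?thesis using fin_cards(3)[OF fV, of E k c0] by blast
    qed
    have "scs V E k c0 = n" "lcs V E k c0 = n" unfolding scs_def lcs_def cs by simp_all
    hence "scs_bar V E k = n" "lcs_bar V E k = n"
      unfolding scs_bar_def lcs_bar_def
      using max_eq[OF BF(1), of n] max_eq[OF BF(4), of n] BF(2,3,5,6) assms(3) by simp_all
    thus ?thesis using True by simp
  next
    case False
    hence kk: "k = chromatic_number V E" using assms(4) by simp
    have lt: "scs V E k c < n \<and> lcs V E k c < n" if pc: "proper_colouring V E k c" for c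
    proof -
      obtain v where v: "v \<in> V" "determining_set V E k c (V - {v})"
        using forced[OF assms(1) ne kk pc] by blast
      have A: "\<forall>x\<in>{card S | S. critical_set V E k c S}. x < n"
      proof
        fix x assume "x \<in> {card S | S. critical_set V E k c S}"
        then obtain S where S: "x = card S" "critical_set V E k c S" by blast
        have "S \<subseteq> V" using crit_sub[OF S(2)] .
        moreover have "S \<noteq> V"
        proof
          assume "S = V"
          hence "V - {v} \<subset> S" using v(1) by blast
          thus False using S(2) v(2) unfolding critical_set_def by blast
        qed
        ultimately have "S \<subset> V" by blast
        thus "x < n" using fV assms(3) psubset_card_mono S(1) by blast
      qed
      note f = fin_cards[OF fV, of E k c]
      have "Min {card S | S. critical_set V E k c S} \<in> {card S | S. critical_set V E k c S}"
        using f(1,3) by (rule Min_in)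
      moreover have "Max {card S | S. critical_set V E k c S} \<in> {card S | S. critical_set V E k c S}"
        using f(1,3) by (rule Max_in)
      ultimately show ?thesis using A unfolding scs_def lcs_def by blast
    qed
    have "Max {scs V E k c | c. proper_colouring V E k c} \<in> {scs V E k c | c. proper_colouring V E k c}"
      using BF(1,2) by (intro Max_in) blast+
    hence "scs_bar V E k < n"
    proof -
      assume "Max {scs V E k c | c. proper_colouring V E k c} \<in> {scs V E k c | c. proper_colouring V E k c}"
      then obtain c where "proper_colouring V E k c" "Max {scs V E k c | c. proper_colouring V E k c} = scs V E k c" by blast
      thus ?thesis using lt unfolding scs_bar_def by metis
    qed
    moreover have "Max {lcs V E k c | c. proper_colouring V E k c} \<in> {lcs V E k c | c. proper_colouring V E k c}"
      using BF(4,5) by (intro Max_in) blast+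
    hence "lcs_bar V E k < n"
    proof -
      assume "Max {lcs V E k c | c. proper_colouring V E k c} \<in> {lcs V E k c | c. proper_colouring V E k c}"
      then obtain c where "proper_colouring V E k c" "Max {lcs V E k c | c. proper_colouring V E k c} = lcs V E k c" by blast
      thus ?thesis using lt unfolding lcs_bar_def by metis
    qed
    ultimately show ?thesis using False by simp
  qed
qed

end
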